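(* An $L$-layer RNN with $H$ heads, hidden dimension $m$ and precision $p$ cannot solve the permutation composition task $\mathsf{PerCom}$ on $[n]$ whenever $LHmp<\log(n!)$. The same holds for RNNs with chain-of-thought.
   Context: Permutation composition $\mathsf{PerCom}(\sigma,\tau)$: the input consists of two bijections $\sigma,\tau:[n]\to[n]$, given as $n$ tokens $\sigma(1),\dots,\sigma(n)$ followed by $n$ tokens $\tau(1),\dots,\tau(n)$. The required output is the sequence $\sigma(\tau(1)),\dots,\sigma(\tau(n))$. RNN layer (one head) with hidden dimension $m$ and precision $p$: one fixes $\mathrm{h}_0\in\mathbb{R}^m$ and computes $\mathrm{h}_i=g_{(i)}(x_i,\mathrm{h}_{i-1})\in\mathbb{R}^m$ and $y_i=f_{(i)}(x_i,\mathrm{h}_i)$ for arbitrary functions $g_{(i)},f_{(i)}$, with hidden states represented by $p$-bit numbers. An $L$-layer, $H$-head RNN stacks $L$ layers, each of $H$ parallel heads with concatenated outputs, interleaved with arbitrary position-wise maps. With chain-of-thought, the model autoregressively generates additional tokens after the input (each appended as a new position), and the answer is read from them. *)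

theory Defs
  imports Complex_Main
begin

text \<open>
  An RNN with value type 'v (type of the values carried between layers,
  arbitrary) and hidden states given as lists of naturals; a hidden state of
  dimension m and precision p is a list of length m of p-bit numbers,
  i.e. entries in {0..<2^p}.  All positions are 0-indexed.

  Components (layer index l, head index k, position i):
   emb i x          position-wise map applied to the input token x
   h0 l k           initial hidden state
   g l k i x h      hidden state update  h_i = g (x_i, h_{i-1})
   f l k i x h      head output          y_i = f (x_i, h_i)
   phi l i ys       position-wise map applied to the concatenated head outputs
   out i v          position-wise map producing the output token
\<close>

type_synonym hstate = "nat list"

datatype 'v rnn = RNN
  (emb: "nat \<Rightarrow> nat \<Rightarrow> 'v")
  (h0: "nat \<Rightarrow> nat \<Rightarrow> hstate")
  (gupd: "nat \<Rightarrow> nat \<Rightarrow> nat \<Rightarrow> 'v \<Rightarrow> hstate \<Rightarrow> hstate")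
  (fout: "nat \<Rightarrow> nat \<Rightarrow> nat \<Rightarrow> 'v \<Rightarrow> hstate \<Rightarrow> 'v")
  (phi: "nat \<Rightarrow> nat \<Rightarrow> 'v list \<Rightarrow> 'v")
  (out: "nat \<Rightarrow> 'v \<Rightarrow> nat")

definition valid_state :: "nat \<Rightarrow> nat \<Rightarrow> hstate \<Rightarrow> bool" where
  "valid_state m p h \<longleftrightarrow> length h = m \<and> (\<forall>x\<in>set h. x < 2 ^ p)"

definition rnn_wf :: "nat \<Rightarrow> nat \<Rightarrow> nat \<Rightarrow> nat \<Rightarrow> 'v rnn \<Rightarrow> bool" where
  "rnn_wf L H m p M \<longleftrightarrow>
     (\<forall>l<L. \<forall>k<H. valid_state m p (h0 M l k) \<and>
        (\<forall>i x h. valid_state m p h \<longrightarrow> valid_state m p (gupd M l k i x h)))"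

text \<open>hseq g h0 xs i = hidden state after processing positions 0..i-1
  (so the hidden state at position i is hseq g h0 xs (Suc i)).\<close>
primrec hseq :: "(nat \<Rightarrow> 'v \<Rightarrow> hstate \<Rightarrow> hstate) \<Rightarrow> hstate \<Rightarrow> (nat \<Rightarrow> 'v) \<Rightarrow> nat \<Rightarrow> hstate" where
  "hseq g h xs 0 = h"
| "hseq g h xs (Suc i) = g i (xs i) (hseq g h xs i)"

definition layer_apply :: "nat \<Rightarrow> 'v rnn \<Rightarrow> nat \<Rightarrow> (nat \<Rightarrow> 'v) \<Rightarrow> nat \<Rightarrow> 'v" where
  "layer_apply H M l xs i =
     phi M l i (map (\<lambda>k. fout M l k i (xs i) (hseq (gupd M l k) (h0 M l k) xs (Suc i))) [0..<H])"

primrec rnn_vals :: "nat \<Rightarrow> 'v rnn \<Rightarrow> (nat \<Rightarrow> nat) \<Rightarrow> nat \<Rightarrow> nat \<Rightarrow> 'v" where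
  "rnn_vals H M tok 0 = (\<lambda>i. emb M i (tok i))"
| "rnn_vals H M tok (Suc l) = layer_apply H M l (rnn_vals H M tok l)"

definition rnn_output :: "nat \<Rightarrow> nat \<Rightarrow> 'v rnn \<Rightarrow> nat list \<Rightarrow> nat \<Rightarrow> nat" where
  "rnn_output L H M xs i = out M i (rnn_vals H M (\<lambda>j. xs ! j) L i)"

primrec cot_seq :: "nat \<Rightarrow> nat \<Rightarrow> 'v rnn \<Rightarrow> nat list \<Rightarrow> nat \<Rightarrow> nat list" where
  "cot_seq L H M xs 0 = xs"
| "cot_seq L H M xs (Suc t) =
     (let s = cot_seq L H M xs t in s @ [rnn_output L H M s (length s - 1)])"

definition perm_n :: "nat \<Rightarrow> (nat \<Rightarrow> nat) \<Rightarrow> bool" where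
  "perm_n n \<sigma> \<longleftrightarrow> bij_betw \<sigma> {1..n} {1..n}"

definition percom_input :: "nat \<Rightarrow> (nat \<Rightarrow> nat) \<Rightarrow> (nat \<Rightarrow> nat) \<Rightarrow> nat list" where
  "percom_input n \<sigma> \<tau> = map \<sigma> [1..<n+1] @ map \<tau> [1..<n+1]"

definition percom_answer :: "nat \<Rightarrow> (nat \<Rightarrow> nat) \<Rightarrow> (nat \<Rightarrow> nat) \<Rightarrow> nat list" where
  "percom_answer n \<sigma> \<tau> = map (\<lambda>j. \<sigma> (\<tau> j)) [1..<n+1]"

text \<open>Without CoT: the answer sigma(tau(j)) is read at the position of tau(j),
  i.e. the (n+j)-th input position (0-indexed n+j-1).\<close>
definition solves_percom :: "nat \<Rightarrow> nat \<Rightarrow> 'v rnn \<Rightarrow> nat \<Rightarrow> bool" where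
  "solves_percom L H M n \<longleftrightarrow>
     (\<forall>\<sigma> \<tau>. perm_n n \<sigma> \<and> perm_n n \<tau> \<longrightarrow>
        map (\<lambda>j. rnn_output L H M (percom_input n \<sigma> \<tau>) (n + j - 1)) [1..<n+1]
          = percom_answer n \<sigma> \<tau>)"

definition solves_percom_cot :: "nat \<Rightarrow> nat \<Rightarrow> 'v rnn \<Rightarrow> nat \<Rightarrow> nat \<Rightarrow> bool" where
  "solves_percom_cot L H M n T \<longleftrightarrow>
     (\<forall>\<sigma> \<tau>. perm_n n \<sigma> \<and> perm_n n \<tau> \<longrightarrow>
        drop (T - n) (drop (2 * n) (cot_seq L H M (percom_input n \<sigma> \<tau>) T))
          = percom_answer n \<sigma> \<tau>)"

end

theory Submission
  imports Defs "HOL-Combinatorics.Permutations" "HOL-Library.FuncSet"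
begin

lemma hseq_valid:
  assumes "valid_state m p h" "\<And>i x h. valid_state m p h \<Longrightarrow> valid_state m p (g i x h)"
  shows "valid_state m p (hseq g h xs j)"
  by (induction j) (auto simp: assms)

lemma hseq_prefix:
  "\<forall>j<N. xs1 j = xs2 j \<Longrightarrow> j \<le> N \<Longrightarrow> hseq g h xs1 j = hseq g h xs2 j"
  by (induction j) auto

lemma hseq_tail:
  assumes "hseq g h xs1 n = hseq g h xs2 n" "\<forall>j\<ge>n. xs1 j = xs2 j" "n \<le> j"
  shows "hseq g h xs1 j = hseq g h xs2 j"
  using assms(3)
proof (induction j rule: dec_induct)
  case base then show ?case using assms(1) .
next
  case (step j) then show ?case using assms(2) by simp
qed

lemma vals_prefix:
  "\<forall>j<N. tok1 j = tok2 j \<Longrightarrow> i < N \<Longrightarrow> rnn_vals H M tok1 l i = rnn_vals H M tok2 l i"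
proof (induction l arbitrary: i)
  case 0 then show ?case by simp
next
  case (Suc l)
  have e: "\<forall>j<N. rnn_vals H M tok1 l j = rnn_vals H M tok2 l j" using Suc by blast
  have "\<And>k. hseq (gupd M l k) (h0 M l k) (rnn_vals H M tok1 l) (Suc i)
        = hseq (gupd M l k) (h0 M l k) (rnn_vals H M tok2 l) (Suc i)"
    by (rule hseq_prefix[OF e]) (use Suc in auto)
  then show ?case using e Suc.prems by (simp add: layer_apply_def)
qed

lemma key:
  assumes "\<forall>j\<ge>n. tok1 j = tok2 j"
    and "\<forall>l<L. \<forall>k<H. hseq (gupd M l k) (h0 M l k) (rnn_vals H M tok1 l) n
                     = hseq (gupd M l k) (h0 M l k) (rnn_vals H M tok2 l) n"
  shows "l \<le> L \<Longrightarrow> n \<le> i \<Longrightarrow> rnn_vals H M tok1 l i = rnn_vals H M tok2 l i"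
proof (induction l arbitrary: i)
  case 0 then show ?case using assms(1) by simp
next
  case (Suc l)
  have e: "\<forall>j\<ge>n. rnn_vals H M tok1 l j = rnn_vals H M tok2 l j" using Suc by auto
  have "\<And>k. k < H \<Longrightarrow> hseq (gupd M l k) (h0 M l k) (rnn_vals H M tok1 l) (Suc i)
        = hseq (gupd M l k) (h0 M l k) (rnn_vals H M tok2 l) (Suc i)"
    by (rule hseq_tail[OF _ e]) (use Suc assms(2) in auto)
  then show ?case unfolding rnn_vals.simps layer_apply_def
    by (intro arg_cong[where f="phi M l i"] map_cong) (use e Suc.prems in auto)
qed

definition tokr :: "nat \<Rightarrow> (nat \<Rightarrow> nat) \<Rightarrow> nat list \<Rightarrow> nat \<Rightarrow> nat" where
  "tokr n \<sigma> r = (\<lambda>j. (map \<sigma> [1..<n+1] @ r) ! j)"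

lemma tokr_low: "j < n \<Longrightarrow> tokr n \<sigma> r j = tokr n \<sigma> r' j"
  by (simp add: tokr_def nth_append)

lemma tokr_high: "n \<le> j \<Longrightarrow> tokr n \<sigma> r j = tokr n \<sigma>' r j"
  by (simp add: tokr_def nth_append)

definition Sf :: "nat \<Rightarrow> nat \<Rightarrow> 'v rnn \<Rightarrow> nat \<Rightarrow> (nat \<Rightarrow> nat) \<Rightarrow> nat list \<Rightarrow> nat \<times> nat \<Rightarrow> hstate" where
  "Sf L H M n \<sigma> r = restrict (\<lambda>(l,k). hseq (gupd M l k) (h0 M l k) (rnn_vals H M (tokr n \<sigma> r) l) n)
       ({..<L} \<times> {..<H})"

lemma Sf_r:
  "l < L \<Longrightarrow> k < H \<Longrightarrow> Sf L H M n \<sigma> r (l,k) = hseq (gupd M l k) (h0 M l k) (rnn_vals H M (tokr n \<sigma> r') l) n"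
proof -
  assume "l < L" "k < H"
  have "\<forall>j<n. rnn_vals H M (tokr n \<sigma> r) l j = rnn_vals H M (tokr n \<sigma> r') l j"
    using vals_prefix[of n "tokr n \<sigma> r" "tokr n \<sigma> r'"] tokr_low by blast
  from hseq_prefix[OF this order_refl] show ?thesis using \<open>l < L\<close> \<open>k < H\<close> by (simp add: Sf_def)
qed

lemma same_out:
  assumes "Sf L H M n \<sigma> r0 = Sf L H M n \<sigma>' r0" "n \<le> i"
  shows "rnn_vals H M (tokr n \<sigma> r) L i = rnn_vals H M (tokr n \<sigma>' r) L i"
proof (rule key[of n _ _ L H M])
  show "\<forall>j\<ge>n. tokr n \<sigma> r j = tokr n \<sigma>' r j" using tokr_high by blast
  show "\<forall>l<L. \<forall>k<H. hseq (gupd M l k) (h0 M l k) (rnn_vals H M (tokr n \<sigma> r) l) n =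
                    hseq (gupd M l k) (h0 M l k) (rnn_vals H M (tokr n \<sigma>' r) l) n"
  proof (intro allI impI)
    fix l k assume "l < L" "k < H"
    then show "hseq (gupd M l k) (h0 M l k) (rnn_vals H M (tokr n \<sigma> r) l) n =
                    hseq (gupd M l k) (h0 M l k) (rnn_vals H M (tokr n \<sigma>' r) l) n"
      using Sf_r[of l L k H M n \<sigma> r0 r] Sf_r[of l L k H M n \<sigma>' r0 r] assms(1) by simp
  qed
qed (use assms in auto)

lemma cot_form:
  assumes "Sf L H M n \<sigma> r0 = Sf L H M n \<sigma>' r0" "0 < n" "r \<noteq> []"
  shows "\<exists>g. g \<noteq> [] \<and> cot_seq L H M (map \<sigma> [1..<n+1] @ r) t = map \<sigma> [1..<n+1] @ g
          \<and> cot_seq L H M (map \<sigma>' [1..<n+1] @ r) t = map \<sigma>' [1..<n+1] @ g"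
proof (induction t)
  case 0 then show ?case using assms(3) by simp
next
  case (Suc t)
  then obtain g where g: "g \<noteq> []" "cot_seq L H M (map \<sigma> [1..<n+1] @ r) t = map \<sigma> [1..<n+1] @ g"
     "cot_seq L H M (map \<sigma>' [1..<n+1] @ r) t = map \<sigma>' [1..<n+1] @ g" by blast
  have "rnn_vals H M (tokr n \<sigma> g) L (length (map \<sigma> [1..<n+1] @ g) - 1)
      = rnn_vals H M (tokr n \<sigma>' g) L (length (map \<sigma>' [1..<n+1] @ g) - 1)"
  proof -
    have pos: "n \<le> n + length g - 1" using g(1) by (cases g) auto
    show ?thesis using same_out[OF assms(1) pos, of g] assms(2) by simp
  qed
  then have "rnn_output L H M (map \<sigma> [1..<n+1] @ g) (length (map \<sigma> [1..<n+1] @ g) - 1)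
      = rnn_output L H M (map \<sigma>' [1..<n+1] @ g) (length (map \<sigma>' [1..<n+1] @ g) - 1)"
    unfolding rnn_output_def tokr_def by simp
  then show ?case using g by (auto simp: Let_def)
qed

theorem theoremA7:
  fixes M :: "'v rnn" and L H m p n :: nat
  assumes "rnn_wf L H m p M"
    and "real (L * H * m * p) < log 2 (fact n)"
  shows "\<not> solves_percom L H M n \<and> (\<forall>T. \<not> solves_percom_cot L H M n T)"
proof -
  define r0 where "r0 = [1..<n+1]"
  define P where "P = {\<sigma>. \<sigma> permutes {1..n}}"
  define A where "A = {..<L} \<times> {..<H}"
  define V where "V = {h. valid_state m p h}"
  have cardP: "card P = fact n" unfolding P_def by (rule card_permutations) auto
  have "2 powr real (L * H * m * p) < fact n"
    using assms(2) by (subst (asm) less_log_iff) auto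
  then have lt: "2 ^ (L * H * m * p) < (fact n :: nat)"
    by (metis of_nat_fact of_nat_less_iff of_nat_numeral of_nat_power powr_realpow zero_less_numeral)
  have n0: "0 < n" using lt by (cases n) auto
  have V_eq: "V = {xs. set xs \<subseteq> {..<2^p} \<and> length xs = m}"
    by (auto simp: V_def valid_state_def)
  have cardV: "card V = (2^p)^m" unfolding V_eq by (subst card_lists_length_eq) auto
  have finV: "finite V" unfolding V_eq by (rule finite_lists_length_eq) auto
  have cardPi: "card (PiE A (\<lambda>_. V)) = 2 ^ (L * H * m * p)"
    by (simp add: card_PiE A_def cardV card_cartesian_product power_mult[symmetric] mult.commute mult.left_commute)
  have finPi: "finite (PiE A (\<lambda>_. V))" using finV by (simp add: A_def finite_PiE)
  have into: "(\<lambda>\<sigma>. Sf L H M n \<sigma> r0) ` P \<subseteq> PiE A (\<lambda>_. V)"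
  proof
    fix s assume "s \<in> (\<lambda>\<sigma>. Sf L H M n \<sigma> r0) ` P"
    then obtain \<sigma> where s: "s = Sf L H M n \<sigma> r0" by blast
    have "\<And>l k. l < L \<Longrightarrow> k < H \<Longrightarrow> valid_state m p (hseq (gupd M l k) (h0 M l k) (rnn_vals H M (tokr n \<sigma> r0) l) n)"
      using assms(1) by (intro hseq_valid) (auto simp: rnn_wf_def)
    then show "s \<in> PiE A (\<lambda>_. V)" by (auto simp: s Sf_def A_def V_def)
  qed
  have "\<not> inj_on (\<lambda>\<sigma>. Sf L H M n \<sigma> r0) P"
  proof
    assume "inj_on (\<lambda>\<sigma>. Sf L H M n \<sigma> r0) P"
    then have "card ((\<lambda>\<sigma>. Sf L H M n \<sigma> r0) ` P) = fact n" using cardP card_image by metis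
    moreover have "card ((\<lambda>\<sigma>. Sf L H M n \<sigma> r0) ` P) \<le> 2 ^ (L * H * m * p)"
      using card_mono[OF finPi into] cardPi by simp
    ultimately show False using lt by simp
  qed
  then obtain \<sigma> \<sigma>' where ss: "\<sigma> \<in> P" "\<sigma>' \<in> P" "\<sigma> \<noteq> \<sigma>'" and eqS: "Sf L H M n \<sigma> r0 = Sf L H M n \<sigma>' r0"
    unfolding inj_on_def by blast
  have ans_ne: "percom_answer n \<sigma> id \<noteq> percom_answer n \<sigma>' id"
  proof
    assume "percom_answer n \<sigma> id = percom_answer n \<sigma>' id"
    then have "map \<sigma> [1..<n+1] = map \<sigma>' [1..<n+1]" by (simp add: percom_answer_def)
    then have "\<forall>x\<in>{1..n}. \<sigma> x = \<sigma>' x" by (simp add: map_eq_conv) (auto simp: le_less)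
    moreover have "\<forall>x. x \<notin> {1..n} \<longrightarrow> \<sigma> x = \<sigma>' x"
      using ss(1,2) by (auto simp: P_def permutes_not_in)
    ultimately have "\<sigma> = \<sigma>'" by blast
    then show False using ss(3) by simp
  qed
  have pn: "perm_n n \<sigma>" "perm_n n \<sigma>'" "perm_n n id"
    using ss by (auto simp: P_def perm_n_def permutes_imp_bij)
  have inp: "\<And>s. percom_input n s id = map s [1..<n+1] @ r0"
    by (simp add: percom_input_def r0_def)
  have part1: "\<not> solves_percom L H M n"
  proof
    assume h: "solves_percom L H M n"
    have "map (\<lambda>j. rnn_output L H M (percom_input n \<sigma> id) (n + j - 1)) [1..<n+1]
        = map (\<lambda>j. rnn_output L H M (percom_input n \<sigma>' id) (n + j - 1)) [1..<n+1]"
      using same_out[OF eqS, of _ r0] by (auto simp: rnn_output_def inp tokr_def)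
    then show False using h pn ans_ne unfolding solves_percom_def by metis
  qed
  have part2: "\<not> solves_percom_cot L H M n T" for T
  proof
    assume h: "solves_percom_cot L H M n T"
    obtain g where g: "cot_seq L H M (percom_input n \<sigma> id) T = map \<sigma> [1..<n+1] @ g"
          "cot_seq L H M (percom_input n \<sigma>' id) T = map \<sigma>' [1..<n+1] @ g"
      using cot_form[OF eqS n0, of r0 T] n0 unfolding inp r0_def by auto
    have "drop (T - n) (drop (2 * n) (cot_seq L H M (percom_input n \<sigma> id) T))
        = drop (T - n) (drop (2 * n) (cot_seq L H M (percom_input n \<sigma>' id) T))"
      unfolding g by simp
    then show False using h pn ans_ne unfolding solves_percom_cot_def by metis
  qed
  show ?thesis using part1 part2 by blast
qed

end
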